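(* Let $\mathcal{X}=[0,1]$, $0<\gamma<\tfrac12$, $L>0$, and let $d$ be an integer with $1\le d\le\left|\mathsf{C}\!\left([0,1],|\cdot|,\sqrt{32/\pi}\cdot\frac{\gamma}{L}\right)\right|$. There exists a class $\mathcal{F}\subseteq[-1,1]^{[0,1]}$ of $L$-Lipschitz functions (w.r.t. $|\cdot|$) with $\mathsf{vc}(\mathcal{F})=d$ such that for any (possibly randomized) online learner there exists a sequence $(x_1,y_1),\dots,(x_T,y_T)\in[0,1]\times\{-1,+1\}$ with $$\sum_{t=1}^T\mathbb{E}\,\mathbb{1}[\hat y_t\neq y_t]-\mathsf{OPT}^{\gamma}_{\mathrm{margin}}\ge\Omega\!\left(\sqrt{T\cdot\mathsf{vc}(\mathcal{F})\ln\!\left(\frac{\left|\mathsf{C}\!\left([0,1],|\cdot|,\sqrt{32/\pi}\cdot\frac{\gamma}{L}\right)\right|}{\mathsf{vc}(\mathcal{F})}\right)}\right),$$ where $\mathsf{OPT}^{\gamma}_{\mathrm{margin}}=\min_{f\in\mathcal{F}}\sum_{t=1}^T\mathbb{1}[y_tf(x_t)\le\gamma]$.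
   Context: Online binary classification: on rounds $t=1,\dots,T$ the adversary reveals $x_t$, the learner outputs $\hat y_t\in\{-1,+1\}$, then $y_t$ is revealed; the expectation is over the learner's randomness. $\mathsf{vc}(\mathcal{F})$ is the pseudo-dimension of $\mathcal{F}$. $|\mathsf{C}([0,1],|\cdot|,r)|$ is the minimal number of points of $[0,1]$ such that every point of $[0,1]$ is within distance $r$ of one of them. $\Omega(\cdot)$ hides a positive absolute constant.
   Formalization: The number of rounds T is restricted to T >= d * ln(|C([0,1],|.|,sqrt(32/pi)*gamma/L)|/d). The statement above fails without it. *)

theory Defs
  imports "HOL-Analysis.Analysis" "HOL-Library.Extended_Nat"
begin

definition cover_num :: "real \<Rightarrow> nat" where
  "cover_num r = (LEAST n. \<exists>C. finite C \<and> C \<subseteq> {0..1} \<and> card C = n \<and>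
                      (\<forall>x\<in>{0..1}. \<exists>c\<in>C. \<bar>x - c\<bar> \<le> r))"

definition pshatters :: "(real \<Rightarrow> real) set \<Rightarrow> real set \<Rightarrow> bool" where
  "pshatters F X \<longleftrightarrow> (\<exists>r :: real \<Rightarrow> real. \<forall>B \<subseteq> X. \<exists>f\<in>F. \<forall>x\<in>X. (f x \<ge> r x \<longleftrightarrow> x \<in> B))"

definition pdim :: "real set \<Rightarrow> (real \<Rightarrow> real) set \<Rightarrow> enat" where
  "pdim D F = Sup {enat (card X) | X. finite X \<and> X \<subseteq> D \<and> pshatters F X}"

text \<open>A (possibly randomized) online learner, represented by the probability q h x
  of predicting +1 at a round whose past examples are h and current instance is x.\<close>
definition learner :: "((real \<times> real) list \<Rightarrow> real \<Rightarrow> real) \<Rightarrow> bool" where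
  "learner q \<longleftrightarrow> (\<forall>h x. 0 \<le> q h x \<and> q h x \<le> 1)"

definition exp_mistakes :: "((real \<times> real) list \<Rightarrow> real \<Rightarrow> real) \<Rightarrow> (real \<times> real) list \<Rightarrow> real" where
  "exp_mistakes q S = (\<Sum>t<length S.
      (let p = q (take t S) (fst (S ! t)) in if snd (S ! t) = 1 then 1 - p else p))"

definition opt_margin :: "(real \<Rightarrow> real) set \<Rightarrow> real \<Rightarrow> (real \<times> real) list \<Rightarrow> nat" where
  "opt_margin F \<gamma> S = (INF f\<in>F. card {t. t < length S \<and> snd (S ! t) * f (fst (S ! t)) \<le> \<gamma>})"

end

theory Submission
  imports Defs
begin

fun ext :: "((real\<times>real) list \<Rightarrow> real) \<Rightarrow> (real\<times>real) list \<Rightarrow> real list \<Rightarrow> (real\<times>real) list" where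
  "ext X h [] = h"
| "ext X h (y#ys) = ext X (h @ [(X h, y)]) ys"

fun av :: "(real list \<Rightarrow> real) \<Rightarrow> nat \<Rightarrow> real" where
  "av G 0 = G []"
| "av G (Suc n) = (av (\<lambda>ys. G (1#ys)) n + av (\<lambda>ys. G ((-1)#ys)) n) / 2"

lemma exp_mistakes_snoc:
  "exp_mistakes q (h @ [(x,y)]) = exp_mistakes q h + (let p = q h x in if y = 1 then 1 - p else p)"
  unfolding exp_mistakes_def by (simp add: nth_append)

lemma length_ext: "length (ext X h ys) = length h + length ys"
  by (induction ys arbitrary: h) auto

lemma snd_ext: "map snd (ext X h ys) = map snd h @ ys"
  by (induction ys arbitrary: h) auto

lemma ext_append: "\<exists>zs. ext X h ys = h @ zs"
  by (induction ys arbitrary: h) (simp, metis append.assoc ext.simps(2))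

lemma take_ext: "take (length h) (ext X h ys) = h"
  using ext_append[of X h ys] by auto

lemma ext_nth:
  "t < length (ext X h ys) \<Longrightarrow> length h \<le> t \<Longrightarrow>
   ext X h ys ! t = (X (take t (ext X h ys)), ys ! (t - length h))"
proof (induction ys arbitrary: h)
  case Nil
  then show ?case by (simp)
next
  case (Cons y ys)
  define h' where "h' = h @ [(X h, y)]"
  have e: "ext X h (y#ys) = ext X h' ys" by (simp add: h'_def)
  show ?case
  proof (cases "t = length h")
    case True
    obtain zs where z: "ext X h' ys = h' @ zs" using ext_append by blast
    show ?thesis unfolding e z using True by (simp add: h'_def nth_append)
  next
    case False
    then have "length h' \<le> t" using Cons.prems by (simp add: h'_def)
    moreover have "t < length (ext X h' ys)" using Cons.prems e by simp
    ultimately have "ext X h' ys ! t = (X (take t (ext X h' ys)), ys ! (t - length h'))"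
      using Cons.IH by blast
    moreover have "t - length h = Suc (t - length h')" using False Cons.prems by (simp add: h'_def)
    ultimately show ?thesis unfolding e by simp
  qed
qed

lemma game:
  "\<exists>ys. length ys = n \<and> set ys \<subseteq> {-1,1} \<and>
     exp_mistakes q (ext X h ys) - G ys \<ge> exp_mistakes q h + real n / 2 - av G n"
proof (induction n arbitrary: h G)
  case 0
  then show ?case by simp
next
  case (Suc n)
  define p where "p = q h (X h)"
  obtain ys1 where y1: "length ys1 = n" "set ys1 \<subseteq> {-1,1}"
    "exp_mistakes q (ext X (h @ [(X h, 1)]) ys1) - G (1#ys1) \<ge>
       exp_mistakes q (h @ [(X h, 1)]) + real n / 2 - av (\<lambda>ys. G (1#ys)) n"
    using Suc.IH[of "h @ [(X h, 1)]" "\<lambda>ys. G (1#ys)"] by blast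
  obtain ys2 where y2: "length ys2 = n" "set ys2 \<subseteq> {-1,1}"
    "exp_mistakes q (ext X (h @ [(X h, -1)]) ys2) - G ((-1)#ys2) \<ge>
       exp_mistakes q (h @ [(X h, -1)]) + real n / 2 - av (\<lambda>ys. G ((-1)#ys)) n"
    using Suc.IH[of "h @ [(X h, -1)]" "\<lambda>ys. G ((-1)#ys)"] by blast
  have a1: "exp_mistakes q (h @ [(X h, 1)]) = exp_mistakes q h + (1 - p)"
    by (simp add: exp_mistakes_snoc p_def)
  have a2: "exp_mistakes q (h @ [(X h, -1)]) = exp_mistakes q h + p"
    by (simp add: exp_mistakes_snoc p_def)
  have avs: "av G (Suc n) = (av (\<lambda>ys. G (1#ys)) n + av (\<lambda>ys. G ((-1)#ys)) n) / 2" by simp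
  show ?case
  proof (cases "(1 - p) - av (\<lambda>ys. G (1#ys)) n \<ge> p - av (\<lambda>ys. G ((-1)#ys)) n")
    case True
    show ?thesis
      apply (rule exI[of _ "1#ys1"])
      using y1 a1 avs True by (simp del: av.simps add: field_simps)
  next
    case False
    show ?thesis
      apply (rule exI[of _ "(-1)#ys2"])
      using y2 a2 avs False by (simp del: av.simps add: field_simps)
  qed
qed


definition pm :: "real list \<Rightarrow> bool" where "pm ys \<longleftrightarrow> set ys \<subseteq> {-1,1}"

lemma av_const: "av (\<lambda>ys. c) n = c"
  by (induction n arbitrary: c) auto

lemma av_add: "av (\<lambda>ys. F ys + G ys) n = av F n + av G n"
  by (induction n arbitrary: F G) (auto simp: field_simps)

lemma av_diff: "av (\<lambda>ys. F ys - G ys) n = av F n - av G n"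
  using av_add[of "\<lambda>ys. F ys - G ys" G n] by simp

lemma av_cmult: "av (\<lambda>ys. c * F ys) n = c * av F n"
  by (induction n arbitrary: F) (auto simp: field_simps)

lemma av_sum: "finite I \<Longrightarrow> av (\<lambda>ys. \<Sum>i\<in>I. F i ys) n = (\<Sum>i\<in>I. av (F i) n)"
  by (induction I rule: finite_induct) (auto simp: av_const av_add)

lemma av_mono: "(\<And>ys. length ys = n \<Longrightarrow> pm ys \<Longrightarrow> F ys \<le> G ys) \<Longrightarrow> av F n \<le> av G n"
proof (induction n arbitrary: F G)
  case 0
  then show ?case by (simp add: pm_def)
next
  case (Suc n)
  have "av (\<lambda>ys. F (1#ys)) n \<le> av (\<lambda>ys. G (1#ys)) n"
    by (rule Suc.IH) (auto intro!: Suc.prems simp: pm_def)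
  moreover have "av (\<lambda>ys. F ((-1)#ys)) n \<le> av (\<lambda>ys. G ((-1)#ys)) n"
    by (rule Suc.IH) (auto intro!: Suc.prems simp: pm_def)
  ultimately show ?case by simp
qed

lemma av_drop: "av (\<lambda>ys. F (drop a ys)) (a + m) = av F m"
  by (induction a arbitrary: F) auto

lemma av_take: "av (\<lambda>ys. F (take m ys)) (m + k) = av F m"
proof (induction m arbitrary: F)
  case 0 then show ?case by (simp add: av_const)
next
  case (Suc m)
  show ?case using Suc.IH[of "\<lambda>ys. F (1#ys)"] Suc.IH[of "\<lambda>ys. F ((-1)#ys)"] by simp
qed

lemma av_block: "a + m \<le> T \<Longrightarrow> av (\<lambda>ys. F (take m (drop a ys))) T = av F m"
proof -
  assume "a + m \<le> T"
  then obtain k where T: "T = a + (m + k)" by (metis add.assoc le_add_diff_inverse)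
  show ?thesis unfolding T
    using av_drop[of "\<lambda>zs. F (take m zs)" a "m+k"] av_take[of F m k] by simp
qed

lemma av_shift: "av (\<lambda>zs. F (s + sum_list zs)) (Suc n) =
   (av (\<lambda>zs. F ((s + 1) + sum_list zs)) n + av (\<lambda>zs. F ((s - 1) + sum_list zs)) n) / 2"
proof -
  have "(\<lambda>zs. F (s + sum_list (1#zs))) = (\<lambda>zs. F ((s + 1) + sum_list zs))"
    by (simp add: add.assoc)
  moreover have "(\<lambda>zs. F (s + sum_list ((-1)#zs))) = (\<lambda>zs. F ((s - 1) + sum_list zs))"
    by (simp add: algebra_simps)
  ultimately show ?thesis by simp
qed

lemma mom2: "av (\<lambda>zs. (s + sum_list zs)^2) n = s^2 + real n"
proof (induction n arbitrary: s)
  case 0 then show ?case by simp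
next
  case (Suc n)
  have "av (\<lambda>zs. (s + sum_list zs)^2) (Suc n) = ((s+1)^2 + real n + ((s-1)^2 + real n)) / 2"
    using av_shift[of "\<lambda>x. x^2" s n] Suc.IH[of "s+1"] Suc.IH[of "s-1"] by simp
  also have "\<dots> = s^2 + real (Suc n)" by (simp add: power2_eq_square algebra_simps)
  finally show ?case .
qed

lemma mom4: "av (\<lambda>zs. (s + sum_list zs)^4) n = s^4 + 6*(s^2)*(real n) + 3*((real n)^2) - 2*(real n)"
proof (induction n arbitrary: s)
  case 0 then show ?case by simp
next
  case (Suc n)
  have "av (\<lambda>zs. (s + sum_list zs)^4) (Suc n) = ((s+1)^4 + 6*((s+1)^2)*(real n) + 3*((real n)^2) - 2*(real n)
     + ((s-1)^4 + 6*((s-1)^2)*(real n) + 3*((real n)^2) - 2*(real n))) / 2"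
    using av_shift[of "\<lambda>x. x^4" s n] Suc.IH[of "s+1"] Suc.IH[of "s-1"] by simp
  also have "\<dots> = s^4 + 6*(s^2)*(real (Suc n)) + 3*((real (Suc n))^2) - 2*(real (Suc n))"
    by (simp add: power2_eq_square power4_eq_xxxx algebra_simps)
  finally show ?case .
qed

lemma abs_poly: "(a::real) > 0 \<Longrightarrow> 3*a^2*x^2 - x^4 \<le> 2*a^3*\<bar>x\<bar>"
proof -
  assume a: "a > 0"
  define t where "t = \<bar>x\<bar>"
  have t0: "t \<ge> 0" by (simp add: t_def)
  have x2: "x^2 = t^2" "x^4 = t^4" by (simp_all add: t_def power2_abs)
  have id: "2*a^3*t - (3*a^2*t^2 - t^4) = t*(t-a)^2*(t+2*a)"
    by algebra
  have "t*(t-a)^2*(t+2*a) \<ge> 0" using t0 a by (intro mult_nonneg_nonneg) auto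
  then have "3*a^2*t^2 - t^4 \<le> 2*a^3*t" using id by linarith
  then show ?thesis unfolding x2 t_def .
qed

lemma abs_moment: "n \<ge> 1 \<Longrightarrow> av (\<lambda>zs. \<bar>sum_list zs\<bar>) n \<ge> 3 * sqrt (real n) / (4 * sqrt 2)"
proof -
  assume n: "n \<ge> 1"
  define a where "a = sqrt (2 * real n)"
  have a0: "a > 0" using n by (simp add: a_def)
  have a2: "a^2 = 2 * real n" by (simp add: a_def)
  have a3: "a^3 = 2 * real n * a" by (metis a2 power2_eq_square power3_eq_cube mult.commute)
  have "av (\<lambda>zs. (3*a^2*(sum_list zs)^2 - (sum_list zs)^4) / (2*a^3)) n \<le> av (\<lambda>zs. \<bar>sum_list zs\<bar>) n"
    by (rule av_mono) (use abs_poly[OF a0] a0 in \<open>simp add: divide_le_eq mult.commute\<close>)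
  moreover have "av (\<lambda>zs. (3*a^2*(sum_list zs)^2 - (sum_list zs)^4) / (2*a^3)) n
     = (3*a^2*real n - (3*(real n)^2 - 2*real n)) / (2*a^3)"
    using av_cmult[of "1/(2*a^3)" "\<lambda>zs. 3*a^2*(sum_list zs)^2 - (sum_list zs)^4" n]
      av_diff[of "\<lambda>zs. 3*a^2*(sum_list zs)^2" "\<lambda>zs. (sum_list zs)^4" n]
      av_cmult[of "3*a^2" "\<lambda>zs. (sum_list zs)^2" n]
      mom2[of 0 n] mom4[of 0 n]
    by simp
  moreover have "(3*a^2*real n - (3*(real n)^2 - 2*real n)) / (2*a^3) \<ge> 3 * sqrt (real n) / (4 * sqrt 2)"
  proof -
    have "(3*a^2*real n - (3*(real n)^2 - 2*real n)) / (2*a^3) \<ge> (3*(real n)^2) / (2*a^3)"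
      using a0 n a2 by (intro divide_right_mono) (auto simp: power2_eq_square)
    also have "(3*(real n)^2) / (2*a^3) = 3 * real n / (4 * a)"
      using a0 n unfolding a3 by (simp add: power2_eq_square field_simps)
    also have "3 * real n / (4 * a) = 3 * sqrt (real n) / (4 * sqrt 2)"
    proof -
      have e1: "real n = sqrt (real n) * sqrt (real n)" by simp
      have e2: "a = sqrt 2 * sqrt (real n)" unfolding a_def by (simp add: real_sqrt_mult)
      have p: "sqrt (real n) > 0" using n by simp
      show ?thesis unfolding e2 using p by (subst e1) (simp add: field_simps)
    qed
    finally show ?thesis .
  qed
  ultimately show ?thesis by linarith
qed


lemma card_mismatch:
  assumes "pm zs" "\<sigma> \<in> {-1,1}"
  shows "real (card {i. i < length zs \<and> zs ! i \<noteq> \<sigma>}) = (real (length zs) - \<sigma> * sum_list zs) / 2"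
proof -
  have "real (length (filter (\<lambda>x. x \<noteq> \<sigma>) zs)) = (real (length zs) - \<sigma> * sum_list zs) / 2"
    using assms by (induction zs) (auto simp: pm_def field_simps)
  then show ?thesis by (simp add: length_filter_conv_card)
qed

lemma card_mismatch_maj:
  assumes "pm zs"
  shows "real (card {i. i < length zs \<and> zs ! i \<noteq> (if 0 \<le> sum_list zs then 1 else -1)})
     = (real (length zs) - \<bar>sum_list zs\<bar>) / 2"
  using card_mismatch[OF assms, of "if 0 \<le> sum_list zs then 1 else -1"] by (auto split: if_splits)

fun hor :: "(nat \<Rightarrow> bool) \<Rightarrow> nat \<Rightarrow> nat" where
  "hor b 0 = 0"
| "hor b (Suc e) = 2 * hor b e + (if b e then 1 else 0)"

lemma hor_split: "\<exists>r. hor b (e + m) = hor b e * 2^m + r \<and> r < 2^m"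
proof (induction m)
  case 0 then show ?case by simp
next
  case (Suc m)
  then obtain r where r: "hor b (e + m) = hor b e * 2^m + r" "r < 2^m" by blast
  show ?case
    by (rule exI[of _ "2*r + (if b (e+m) then 1 else 0)"]) (use r in auto)
qed

lemma hor_lt: "hor b e < 2^e"
  using hor_split[of b 0 e] by auto

lemma hor_cong: "(\<And>e'. e' < e \<Longrightarrow> b e' = b' e') \<Longrightarrow> hor b e = hor b' e"
  by (induction e) auto

lemma hor_bit:
  assumes "e < l"
  shows "(2 * hor b e + 1) * 2^(l - e - 1) \<le> hor b l \<longleftrightarrow> b e"
proof -
  obtain r where r: "hor b (Suc e + (l - e - 1)) = hor b (Suc e) * 2^(l - e - 1) + r" "r < 2^(l-e-1)"
    using hor_split by blast
  have l: "Suc e + (l - e - 1) = l" using assms by simp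
  show ?thesis
  proof (cases "b e")
    case True
    then show ?thesis using r l by (simp add: algebra_simps)
  next
    case False
    then have "hor b l = 2 * hor b e * 2^(l-e-1) + r" using r l by simp
    then show ?thesis using r False by (simp add: algebra_simps)
  qed
qed

lemma hor_q_bound:
  assumes "e < l"
  shows "(2 * hor b e + 1) * 2^(l - e - 1) < 2^l" and "(2 * hor b e + 1) * 2^(l - e - 1) \<ge> 1"
proof -
  have "hor b e + 1 \<le> 2^e" using hor_lt[of b e] by simp
  then have "(2 * hor b e + 1) * 2^(l - e - 1) < (2 * 2^e) * 2^(l - e - 1)"
    by (intro mult_strict_right_mono) auto
  also have "(2 * 2^e) * 2^(l - e - 1) = (2::nat)^l"
    using assms by (simp flip: power_add power_Suc)
  finally show "(2 * hor b e + 1) * 2^(l - e - 1) < 2^l" .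
  have "(2::nat)^(l-e-1) \<ge> 1" by simp
  then show "(2 * hor b e + 1) * 2^(l - e - 1) \<ge> 1" by (metis le_trans mult_le_mono1 le_add2 mult_1)
qed

lemma Min_le_shift:
  fixes f g :: "'a \<Rightarrow> real"
  assumes "finite A" "A \<noteq> {}" "\<And>k. k \<in> A \<Longrightarrow> f k \<le> g k + c"
  shows "Min (f ` A) \<le> Min (g ` A) + c"
proof -
  obtain k0 where k0: "k0 \<in> A" "Min (g ` A) = g k0"
  proof -
    have "Min (g ` A) \<in> g ` A" using Min_in[of "g ` A"] assms(1,2) by auto
    then show ?thesis using that by auto
  qed
  have "Min (f ` A) \<le> f k0" using assms(1) k0(1) by simp
  then show ?thesis using assms(3)[OF k0(1)] k0(2) by simp
qed

lemma Min_le_ex: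
  fixes f g :: "'a \<Rightarrow> real"
  assumes "finite A" "A \<noteq> {}" "\<And>k. k \<in> A \<Longrightarrow> \<exists>k'\<in>A. f k' \<le> g k"
  shows "Min (f ` A) \<le> Min (g ` A)"
proof -
  obtain k0 where k0: "k0 \<in> A" "Min (g ` A) = g k0"
  proof -
    have "Min (g ` A) \<in> g ` A" using Min_in[of "g ` A"] assms(1,2) by auto
    then show ?thesis using that by auto
  qed
  obtain k' where "k' \<in> A" "f k' \<le> g k0" using assms(3)[OF k0(1)] by blast
  moreover have "Min (f ` A) \<le> f k'" using assms(1) \<open>k' \<in> A\<close> by simp
  ultimately show ?thesis using k0(2) by simp
qed


locale constr =
  fixes d l K T :: nat and L H D gam :: real
  assumes d1: "d \<ge> 1" and l1: "l \<ge> 1" and K1: "K \<ge> 1" and KdL: "K \<le> d*l" and KT: "K \<le> T"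
    and L0: "L > 0" and Hg: "H > gam" and g0: "gam > 0" and g1: "gam < 1"
    and D0: "D > 0"
    and sepH: "d*2^l > 2 \<Longrightarrow> 2*H \<le> L*D"
    and fit: "real (d*2^l - 2) * D \<le> 1"
begin

definition "nn = T div K"
definition "lev t = min (K-1) (t div nn)"
definition "len gg = (if gg = K-1 then T - (K-1)*nn else nn)"
definition "mbit zs gg \<longleftrightarrow> gg < K \<and> 0 \<le> sum_list (take (len gg) (drop (gg*nn) zs))"
definition "bitsq zs i = (\<lambda>e. mbit zs (i*l + e))"
definition "kq zs gg = (gg div l) * 2^l + (2 * hor (bitsq zs (gg div l)) (gg mod l) + 1) * 2^(l - gg mod l - 1)"
definition "pos k = real (k - 1) * D"
definition "XX h = pos (kq (map snd h) (lev (length h)))"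
definition "thr zs i = hor (bitsq zs i) l"
definition "val s k = (if k mod 2^l = 0 then 0 else if k mod 2^l \<le> s (k div 2^l) then H else -H)"
definition "AA = {1..<d*2^l}"
definition "fs s x = max (-1) (min 1 (Min ((\<lambda>k. val s k + L * \<bar>x - pos k\<bar>) ` AA)))"
definition "FF = range fs"
definition "Bnd ys = (\<Sum>gg<K. (real (len gg) - \<bar>sum_list (take (len gg) (drop (gg*nn) ys))\<bar>) / 2)"

lemma H0: "H > 0" using Hg g0 by simp

lemma two_le: "d * 2^l \<ge> 2"
proof -
  have "(2::nat)^l \<ge> 2^1" using l1 by (intro power_increasing) auto
  then show ?thesis using d1 by (metis mult_le_mono one_le_numeral power_one_right mult_1)
qed

lemma AA_fin: "finite AA" and AA_ne: "AA \<noteq> {}"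
  using two_le by (auto simp: AA_def)

lemma val_bound: "\<bar>val s k\<bar> \<le> H"
  using H0 by (auto simp: val_def)

lemma pos_dist: "a \<in> AA \<Longrightarrow> k \<in> AA \<Longrightarrow> a \<noteq> k \<Longrightarrow> 2*H \<le> L * \<bar>pos a - pos k\<bar>"
proof -
  assume a: "a \<in> AA" "k \<in> AA" "a \<noteq> k"
  then have "d*2^l > 2" by (auto simp: AA_def)
  then have h: "2*H \<le> L*D" by (rule sepH)
  have "pos a - pos k = (real a - real k) * D" using a by (auto simp: pos_def AA_def of_nat_diff algebra_simps)
  moreover have "\<bar>real a - real k\<bar> \<ge> 1" using a(3) by linarith
  ultimately have "\<bar>pos a - pos k\<bar> \<ge> D" using D0 by (simp add: abs_mult)
  then have "L * \<bar>pos a - pos k\<bar> \<ge> L * D" using L0 by simp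
  then show ?thesis using h by simp
qed

lemma clamp_lip: "\<bar>max (-1) (min 1 (a::real)) - max (-1) (min 1 b)\<bar> \<le> \<bar>a - b\<bar>"
  by (auto simp: min_def max_def abs_if)

lemma fs_anchor: "k \<in> AA \<Longrightarrow> fs s (pos k) = max (-1) (min 1 (val s k))"
proof -
  assume k: "k \<in> AA"
  have "Min ((\<lambda>a. val s a + L * \<bar>pos k - pos a\<bar>) ` AA) = val s k"
  proof (rule Min_eqI)
    show "finite ((\<lambda>a. val s a + L * \<bar>pos k - pos a\<bar>) ` AA)" using AA_fin by simp
    show "val s k \<in> (\<lambda>a. val s a + L * \<bar>pos k - pos a\<bar>) ` AA" using k by force
    fix y assume "y \<in> (\<lambda>a. val s a + L * \<bar>pos k - pos a\<bar>) ` AA"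
    then obtain a where a: "a \<in> AA" "y = val s a + L * \<bar>pos k - pos a\<bar>" by auto
    show "val s k \<le> y"
    proof (cases "a = k")
      case True then show ?thesis using a by simp
    next
      case False
      then have "2*H \<le> L * \<bar>pos k - pos a\<bar>" using pos_dist[OF k a(1)] by simp
      then show ?thesis using a val_bound[of s a] val_bound[of s k] by (auto simp: abs_le_iff)
    qed
  qed
  then show ?thesis by (simp add: fs_def)
qed

lemma fs_bound: "\<bar>fs s x\<bar> \<le> 1"
  by (auto simp: fs_def)

lemma fs_lip: "L-lipschitz_on S (fs s)"
  unfolding lipschitz_on_def
proof (intro conjI ballI)
  show "0 \<le> L" using L0 by simp
  fix x y assume "x \<in> S" "y \<in> S"
  let ?m = "\<lambda>x. Min ((\<lambda>k. val s k + L * \<bar>x - pos k\<bar>) ` AA)"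
  have "\<And>k. val s k + L * \<bar>x - pos k\<bar> \<le> val s k + L * \<bar>y - pos k\<bar> + L * \<bar>x - y\<bar>"
  proof -
    fix k
    have "\<bar>x - pos k\<bar> \<le> \<bar>y - pos k\<bar> + \<bar>x - y\<bar>" by simp
    then show "val s k + L * \<bar>x - pos k\<bar> \<le> val s k + L * \<bar>y - pos k\<bar> + L * \<bar>x - y\<bar>"
      using L0 by (simp add: distrib_left[symmetric] mult_left_mono)
  qed
  then have 1: "?m x \<le> ?m y + L * \<bar>x - y\<bar>"
    by (intro Min_le_shift AA_fin AA_ne)
  have "\<And>k. val s k + L * \<bar>y - pos k\<bar> \<le> val s k + L * \<bar>x - pos k\<bar> + L * \<bar>x - y\<bar>"
  proof -
    fix k
    have "\<bar>y - pos k\<bar> \<le> \<bar>x - pos k\<bar> + \<bar>x - y\<bar>" by simp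
    then show "val s k + L * \<bar>y - pos k\<bar> \<le> val s k + L * \<bar>x - pos k\<bar> + L * \<bar>x - y\<bar>"
      using L0 by (simp add: distrib_left[symmetric] mult_left_mono)
  qed
  then have 2: "?m y \<le> ?m x + L * \<bar>x - y\<bar>"
    by (intro Min_le_shift AA_fin AA_ne)
  have "\<bar>?m x - ?m y\<bar> \<le> L * \<bar>x - y\<bar>" using 1 2 by linarith
  then show "dist (fs s x) (fs s y) \<le> L * dist x y"
    unfolding fs_def dist_real_def using clamp_lip[of "?m x" "?m y"] by linarith
qed


definition "reg i x \<longleftrightarrow> i < d \<and> (i = 0 \<or> pos (i*2^l) \<le> x) \<and> (Suc i = d \<or> x \<le> pos (Suc i * 2^l))"

lemma pos_mono: "1 \<le> a \<Longrightarrow> a < b \<Longrightarrow> pos a < pos b"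
  using D0 by (simp add: pos_def)

lemma pos_inj: "1 \<le> a \<Longrightarrow> 1 \<le> b \<Longrightarrow> pos a = pos b \<Longrightarrow> a = b"
  using pos_mono by (metis less_irrefl nat_neq_iff)

lemma pos_01: "k \<in> AA \<Longrightarrow> pos k \<in> {0..1}"
proof -
  assume k: "k \<in> AA"
  then have "k - 1 \<le> d*2^l - 2" by (auto simp: AA_def)
  then have "real (k-1) * D \<le> real (d*2^l - 2) * D" using D0 by (intro mult_right_mono) auto
  then have "real (k-1) * D \<le> 1" using fit by linarith
  then show ?thesis using D0 by (auto simp: pos_def)
qed

lemma pow_ge2: "(2::nat)^l \<ge> 2"
proof -
  have "(2::nat)^l \<ge> 2^1" using l1 by (intro power_increasing) auto
  then show ?thesis by simp
qed

lemma chain: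
  assumes r: "reg i x" and si: "s i \<le> s' i"
  shows "fs s x \<le> fs s' x"
proof -
  have i: "i < d" using r by (simp add: reg_def)
  have "Min ((\<lambda>k. val s k + L * \<bar>x - pos k\<bar>) ` AA) \<le> Min ((\<lambda>k. val s' k + L * \<bar>x - pos k\<bar>) ` AA)"
  proof (rule Min_le_ex[OF AA_fin AA_ne])
    fix k assume k: "k \<in> AA"
    show "\<exists>k'\<in>AA. val s k' + L * \<bar>x - pos k'\<bar> \<le> val s' k + L * \<bar>x - pos k\<bar>"
    proof (cases "k < i*2^l")
      case True
      define k' where "k' = i*2^l"
      have i0: "i \<noteq> 0"
      proof
        assume "i = 0" then show False using True by simp
      qed
      then have xk': "pos k' \<le> x" using r by (simp add: reg_def k'_def)
      have k'A: "k' \<in> AA" using i i0 unfolding AA_def k'_def by auto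
      have k1: "1 \<le> k" using k by (simp add: AA_def)
      have "pos k < pos k'" using pos_mono[OF k1] True by (simp add: k'_def)
      moreover have "2*H \<le> L * \<bar>pos k - pos k'\<bar>" using pos_dist[OF k k'A] True k'_def by simp
      moreover have "val s k' = 0" by (simp add: val_def k'_def)
      ultimately have a: "val s k' = 0" "2*H \<le> L * (pos k' - pos k)" "\<bar>x - pos k'\<bar> = x - pos k'"
        "\<bar>x - pos k\<bar> = x - pos k" using xk' by auto
      have "L * (x - pos k) = L * (x - pos k') + L * (pos k' - pos k)" by (simp add: algebra_simps)
      then have "val s k' + L * \<bar>x - pos k'\<bar> \<le> val s' k + L * \<bar>x - pos k\<bar>"
        using a val_bound[of s' k] by (simp add: abs_le_iff)
      then show ?thesis using k'A by blast
    next
      case False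
      show ?thesis
      proof (cases "k > Suc i * 2^l")
        case True
        define k' where "k' = Suc i*2^l"
        have "k < d * 2^l" using k by (simp add: AA_def)
        then have i0: "Suc i \<noteq> d" using True by auto
        then have xk': "x \<le> pos k'" using r by (simp add: reg_def k'_def)
        have "Suc i < d" using i i0 by simp
        then have "Suc i * 2^l < d * 2^l" by (intro mult_less_mono1) simp_all
        then have k'A: "k' \<in> AA" unfolding AA_def k'_def using pow_ge2 by simp
        have "pos k' < pos k" using pos_mono[of k' k] True k'A by (simp add: k'_def AA_def)
        moreover have "2*H \<le> L * \<bar>pos k - pos k'\<bar>" using pos_dist[OF k k'A] True k'_def by simp
        moreover have "val s k' = 0" by (simp add: val_def k'_def)
        ultimately have a: "val s k' = 0" "2*H \<le> L * (pos k - pos k')" "\<bar>x - pos k'\<bar> = pos k' - x"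
          "\<bar>x - pos k\<bar> = pos k - x" using xk' by auto
        have "L * (pos k - x) = L * (pos k' - x) + L * (pos k - pos k')" by (simp add: algebra_simps)
        then have "val s k' + L * \<bar>x - pos k'\<bar> \<le> val s' k + L * \<bar>x - pos k\<bar>"
          using a val_bound[of s' k] by (simp add: abs_le_iff)
        then show ?thesis using k'A by blast
      next
        case False2: False
        have "val s k \<le> val s' k"
        proof (cases "k mod 2^l = 0")
          case True then show ?thesis by (simp add: val_def)
        next
          case nz: False
          have "k div 2^l = i"
          proof -
            have "i * 2^l \<le> k" using False by simp
            then have a: "i \<le> k div 2^l" by (simp add: less_eq_div_iff_mult_less_eq)
            have "k \<noteq> Suc i * 2^l" using nz by auto
            then have "k < Suc i * 2^l" using False2 by simp
            then have b: "k div 2^l < Suc i" by (simp add: div_less_iff_less_mult)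
            show ?thesis using a b by simp
          qed
          then show ?thesis using si H0 by (auto simp: val_def)
        qed
        then show ?thesis using k by (intro bexI[of _ k]) auto
      qed
    qed
  qed
  then show ?thesis unfolding fs_def by (simp add: min_def max_def)
qed

lemma reg_ex: "\<exists>i. reg i x"
proof -
  define i where "i = (LEAST i. Suc i = d \<or> x \<le> pos (Suc i * 2^l))"
  have ex: "Suc (d-1) = d \<or> x \<le> pos (Suc (d-1) * 2^l)" using d1 by simp
  have P: "Suc i = d \<or> x \<le> pos (Suc i * 2^l)" unfolding i_def by (rule LeastI[of "\<lambda>i. Suc i = d \<or> x \<le> pos (Suc i * 2^l)" "d-1", OF ex])
  have le: "i \<le> d - 1" unfolding i_def by (rule Least_le[of "\<lambda>i. Suc i = d \<or> x \<le> pos (Suc i * 2^l)" "d-1", OF ex])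
  have "i = 0 \<or> pos (i*2^l) \<le> x"
  proof (cases i)
    case 0 then show ?thesis by simp
  next
    case (Suc j)
    have "\<not> (Suc j = d \<or> x \<le> pos (Suc j * 2^l))"
      using not_less_Least[of j "\<lambda>i. Suc i = d \<or> x \<le> pos (Suc i * 2^l)"] Suc unfolding i_def by simp
    then show ?thesis using Suc by simp
  qed
  then have "reg i x" using P le d1 unfolding reg_def by auto
  then show ?thesis by blast
qed

lemma shatter_le:
  assumes "finite X" "pshatters FF X"
  shows "card X \<le> d"
proof (rule ccontr)
  assume "\<not> card X \<le> d"
  define rg where "rg x = (SOME i. reg i x)" for x
  have rg: "reg (rg x) x" for x unfolding rg_def using reg_ex by (rule someI_ex)
  have "rg ` X \<subseteq> {..<d}" using rg by (auto simp: reg_def)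
  then have "\<not> inj_on rg X"
    using card_inj_on_le[of rg X "{..<d}"] \<open>\<not> card X \<le> d\<close> by auto
  then obtain x y where xy: "x \<in> X" "y \<in> X" "x \<noteq> y" "rg x = rg y" by (auto simp: inj_on_def)
  obtain r where r: "\<forall>B\<subseteq>X. \<exists>f\<in>FF. \<forall>z\<in>X. (r z \<le> f z \<longleftrightarrow> z \<in> B)"
    using assms(2) by (auto simp: pshatters_def)
  obtain f where f: "f \<in> FF" "\<forall>z\<in>X. (r z \<le> f z \<longleftrightarrow> z \<in> {x})"
    using r xy(1) by (meson empty_subsetI insert_subset)
  obtain g where g: "g \<in> FF" "\<forall>z\<in>X. (r z \<le> g z \<longleftrightarrow> z \<in> {y})"
    using r xy(2) by (meson empty_subsetI insert_subset)
  obtain s where s: "f = fs s" using f(1) by (auto simp: FF_def)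
  obtain s' where s': "g = fs s'" using g(1) by (auto simp: FF_def)
  have f1: "(r y \<le> f y) = (y \<in> {x})" "(r x \<le> f x) = (x \<in> {x})" using f(2) xy(1,2) by blast+
  have g1: "(r y \<le> g y) = (y \<in> {y})" "(r x \<le> g x) = (x \<in> {y})" using g(2) xy(1,2) by blast+
  have fx: "r x \<le> f x" "\<not> r y \<le> f y" using f1 xy(3) by auto
  have gx: "\<not> r x \<le> g x" "r y \<le> g y" using g1 xy(3) by auto
  show False
  proof (cases "s (rg x) \<le> s' (rg x)")
    case True
    then have "f x \<le> g x" using chain[OF rg[of x]] s s' by simp
    then show False using fx gx by simp
  next
    case False
    then have "g y \<le> f y" using chain[OF rg[of y], of s' s] s s' xy(4) by simp
    then show False using fx gx by simp
  qed
qed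

lemma shatter_ex: "\<exists>X. finite X \<and> X \<subseteq> {0..1} \<and> pshatters FF X \<and> card X = d"
proof -
  define p where "p i = pos (i*2^l + 1)" for i
  define X where "X = p ` {..<d}"
  have inA: "i < d \<Longrightarrow> i*2^l + 1 \<in> AA" for i
  proof -
    assume "i < d"
    then have "Suc i * 2^l \<le> d * 2^l" by (intro mult_le_mono1) simp
    then show ?thesis using pow_ge2 by (simp add: AA_def)
  qed
  have inj: "inj_on p {..<d}"
  proof
    fix a b assume ab: "a \<in> {..<d}" "b \<in> {..<d}" "p a = p b"
    then have "a*2^l + 1 = b*2^l + 1" unfolding p_def by (intro pos_inj) auto
    then show "a = b" by simp
  qed
  have card: "card X = d" unfolding X_def using card_image[OF inj] by simp
  have sub: "X \<subseteq> {0..1}" unfolding X_def p_def using pos_01 inA by auto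
  have mod1: "(i*2^l + 1) mod (2::nat)^l = 1" for i
    using pow_ge2 l1 by (simp only: mod_mult_self3) (simp add: mod_less)
  have div1: "(i*2^l + 1) div (2::nat)^l = i" for i
    using pow_ge2 by (simp only: div_mult_self3) (simp add: div_less)
  have val: "i < d \<Longrightarrow> fs s (p i) = (if 1 \<le> s i then min 1 H else - min 1 H)" for s i
  proof -
    assume i: "i < d"
    have v: "val s (i*2^l+1) = (if 1 \<le> s i then H else -H)"
      unfolding val_def mod1 div1 by simp
    show ?thesis unfolding p_def fs_anchor[OF inA[OF i]] v using H0 by (simp add: min_def max_def)
  qed
  have "pshatters FF X"
    unfolding pshatters_def
  proof (intro exI[of _ "\<lambda>_. 0"] allI impI)
    fix B assume B: "B \<subseteq> X"
    define s where "s i = (if p i \<in> B then 1 else (0::nat))" for i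
    show "\<exists>f\<in>FF. \<forall>x\<in>X. (0 \<le> f x) = (x \<in> B)"
    proof (intro bexI[of _ "fs s"] ballI)
      fix x assume "x \<in> X"
      then obtain i where i: "i < d" "x = p i" by (auto simp: X_def)
      show "(0 \<le> fs s x) = (x \<in> B)" using val[OF i(1), of s] i H0 by (auto simp: s_def)
    qed (simp add: FF_def)
  qed
  then show ?thesis using card sub by (auto simp: X_def)
qed

lemma pdim_FF: "pdim {0..1} FF = enat d"
proof (rule antisym)
  show "pdim {0..1} FF \<le> enat d"
    unfolding pdim_def by (rule Sup_least) (auto dest: shatter_le)
  obtain X where X: "finite X" "X \<subseteq> {0..1}" "pshatters FF X" "card X = d" using shatter_ex by blast
  show "enat d \<le> pdim {0..1} FF"
    unfolding pdim_def by (rule Sup_upper) (use X in auto)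
qed

end

context constr begin

lemma nn1: "nn \<ge> 1" and Knn: "K * nn \<le> T"
proof -
  show "nn \<ge> 1" unfolding nn_def using KT K1 by (simp add: div_greater_zero_iff Suc_le_eq)
  show "K * nn \<le> T" unfolding nn_def by (simp add: mult.commute)
qed

lemma lev_lt: "lev t < K"
  using K1 by (simp add: lev_def)

lemma len_ge: "len gg \<ge> nn"
proof -
  have "(K-1)*nn + nn \<le> T" using Knn K1 by (metis Suc_diff_1 add.commute less_le_trans mult_Suc zero_less_one)
  then show ?thesis by (auto simp: len_def)
qed

lemma len_end: "gg < K \<Longrightarrow> gg*nn + len gg \<le> T"
proof -
  assume g: "gg < K"
  have a: "(K-1)*nn + nn \<le> T" using Knn K1 by (metis Suc_diff_1 add.commute less_le_trans mult_Suc zero_less_one)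
  show ?thesis
  proof (cases "gg = K-1")
    case True then show ?thesis using a by (simp add: len_def)
  next
    case False
    then have "Suc gg \<le> K - 1" using g by simp
    then have "Suc gg * nn \<le> (K-1)*nn" by (rule mult_le_mono1)
    then show ?thesis using False a by (simp add: len_def)
  qed
qed

lemma lev_iff: "t < T \<Longrightarrow> gg < K \<Longrightarrow> lev t = gg \<longleftrightarrow> gg*nn \<le> t \<and> t < gg*nn + len gg"
proof -
  assume t: "t < T" and g: "gg < K"
  have n0: "nn > 0" using nn1 by simp
  show ?thesis
  proof (cases "gg = K-1")
    case True
    have "lev t = gg \<longleftrightarrow> K - 1 \<le> t div nn" using True by (auto simp: lev_def)
    also have "\<dots> \<longleftrightarrow> (K-1)*nn \<le> t" using n0 by (simp add: less_eq_div_iff_mult_less_eq)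
    finally show ?thesis using True t len_end[OF g] by (auto simp: len_def)
  next
    case False
    then have "lev t = gg \<longleftrightarrow> t div nn = gg" using g by (auto simp: lev_def min_def)
    also have "\<dots> \<longleftrightarrow> gg*nn \<le> t \<and> t < gg*nn + nn"
    proof
      assume a: "t div nn = gg"
      show "gg*nn \<le> t \<and> t < gg*nn + nn"
        using div_times_less_eq_dividend[of t nn] dividend_less_div_times[OF n0, of t] a by simp
    next
      assume a: "gg*nn \<le> t \<and> t < gg*nn + nn"
      show "t div nn = gg" by (rule div_nat_eqI) (use a in \<open>simp_all add: mult.commute\<close>)
    qed
    finally show ?thesis using False by (simp add: len_def)
  qed
qed

lemma sum_len: "(\<Sum>gg<K. len gg) = T"
proof -
  have "(\<Sum>gg<K. len gg) = (\<Sum>gg<K-1. len gg) + len (K-1)"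
    using K1 by (metis Suc_diff_1 less_le_trans sum.lessThan_Suc zero_less_one)
  also have "(\<Sum>gg<K-1. len gg) = (K-1)*nn" by (simp add: len_def)
  also have "len (K-1) = T - (K-1)*nn" by (simp add: len_def)
  finally show ?thesis using len_end[of "K-1"] K1 by (simp add: len_def)
qed

lemma kq_parts:
  assumes g: "gg < K"
  shows "kq zs gg mod 2^l = (2 * hor (bitsq zs (gg div l)) (gg mod l) + 1) * 2^(l - gg mod l - 1)"
    and "kq zs gg div 2^l = gg div l"
    and "kq zs gg \<in> AA"
proof -
  let ?q = "(2 * hor (bitsq zs (gg div l)) (gg mod l) + 1) * 2^(l - gg mod l - 1)"
  have e: "gg mod l < l" using l1 by simp
  have q: "?q < 2^l" "?q \<ge> 1" using hor_q_bound[OF e] by auto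
  have kq: "kq zs gg = gg div l * 2^l + ?q" by (simp add: kq_def)
  show "kq zs gg mod 2^l = ?q" unfolding kq using q by simp
  show "kq zs gg div 2^l = gg div l" unfolding kq using q by simp
  have "gg div l < d" using g KdL l1 by (simp add: div_less_iff_less_mult mult.commute)
  then have "Suc (gg div l) * 2^l \<le> d * 2^l" by (intro mult_le_mono1) simp
  then show "kq zs gg \<in> AA" unfolding AA_def kq using q by simp
qed

lemma XX_01: "XX h \<in> {0..1}"
  unfolding XX_def using pos_01 kq_parts(3) lev_lt by blast

lemma mbit_take: "gg'*nn + len gg' \<le> t \<Longrightarrow> mbit (take t ys) gg' = mbit ys gg'"
proof -
  assume a: "gg'*nn + len gg' \<le> t"
  have "take (len gg') (drop (gg'*nn) (take t ys)) = take (len gg') (drop (gg'*nn) ys)"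
    using a by (simp add: drop_take min_def)
  then show ?thesis by (simp add: mbit_def)
qed

lemma kq_take: "kq (take t ys) (lev t) = kq ys (lev t)"
proof -
  let ?g = "lev t"
  have gle: "?g * nn \<le> t"
  proof (cases "?g = t div nn")
    case True then show ?thesis by (simp add: mult.commute)
  next
    case False
    then have "?g = K - 1" "K - 1 \<le> t div nn" by (auto simp: lev_def min_def split: if_splits)
    then show ?thesis using nn1 by (simp add: less_eq_div_iff_mult_less_eq)
  qed
  have "hor (bitsq (take t ys) (?g div l)) (?g mod l) = hor (bitsq ys (?g div l)) (?g mod l)"
  proof (rule hor_cong)
    fix e' assume e': "e' < ?g mod l"
    define g' where "g' = ?g div l * l + e'"
    have g'lt: "g' < ?g" unfolding g'_def using e' by (metis add_less_cancel_left div_mult_mod_eq)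
    then have "g' < K - 1" using lev_lt by (simp add: lev_def)
    then have "len g' = nn" by (simp add: len_def)
    moreover have "Suc g' * nn \<le> ?g * nn" using g'lt by (intro mult_le_mono1) simp
    ultimately have "g' * nn + len g' \<le> t" using gle by simp
    then show "bitsq (take t ys) (?g div l) e' = bitsq ys (?g div l) e'"
      unfolding bitsq_def g'_def[symmetric] by (rule mbit_take)
  qed
  then show ?thesis by (simp add: kq_def)
qed

lemma fs_query:
  assumes g: "gg < K"
  shows "fs (thr ys) (pos (kq ys gg)) = (if mbit ys gg then min 1 H else - min 1 H)"
proof -
  have e: "gg mod l < l" using l1 by simp
  have nz: "kq ys gg mod 2^l \<noteq> 0" using kq_parts(1)[OF g, of ys] hor_q_bound(2)[OF e] by auto
  have "kq ys gg mod 2^l \<le> thr ys (kq ys gg div 2^l) \<longleftrightarrow> bitsq ys (gg div l) (gg mod l)"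
    unfolding kq_parts(1,2)[OF g] thr_def by (rule hor_bit[OF e])
  also have "bitsq ys (gg div l) (gg mod l) \<longleftrightarrow> mbit ys gg" by (simp add: bitsq_def)
  finally have v: "val (thr ys) (kq ys gg) = (if mbit ys gg then H else -H)"
    using nz by (simp add: val_def)
  show ?thesis unfolding fs_anchor[OF kq_parts(3)[OF g]] v using H0 by (simp add: min_def max_def)
qed

end

context constr begin

lemma S_nth:
  assumes "length ys = T" "t < T"
  shows "ext XX [] ys ! t = (pos (kq ys (lev t)), ys ! t)"
proof -
  let ?S = "ext XX [] ys"
  have lS: "length ?S = T" using assms by (simp add: length_ext)
  have e: "?S ! t = (XX (take t ?S), ys ! t)" using ext_nth[of t XX "[]" ys] lS assms by simp
  have "map snd (take t ?S) = take t ys" using snd_ext[of XX "[]" ys] by (simp add: take_map[symmetric])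
  moreover have "length (take t ?S) = t" using lS assms by simp
  ultimately have x1: "XX (take t ?S) = pos (kq (take t ys) (lev t))" unfolding XX_def by simp
  have "XX (take t ?S) = pos (kq ys (lev t))" unfolding x1 by (simp only: kq_take)
  then show ?thesis using e by simp
qed

definition "sg ys gg = (if mbit ys gg then 1 else (-1::real))"
definition "blk ys gg = take (len gg) (drop (gg*nn) ys)"

lemma err_set:
  assumes ys: "length ys = T" "pm ys"
  shows "{t. t < length (ext XX [] ys) \<and> snd (ext XX [] ys ! t) * fs (thr ys) (fst (ext XX [] ys ! t)) \<le> gam}
       = {t. t < T \<and> ys ! t \<noteq> sg ys (lev t)}"
proof -
  have m: "min 1 H > gam" using Hg g1 by simp
  have "t < T \<Longrightarrow> (ys ! t * fs (thr ys) (pos (kq ys (lev t))) \<le> gam) = (ys ! t \<noteq> sg ys (lev t))" for t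
  proof -
    assume t: "t < T"
    have y: "ys ! t = 1 \<or> ys ! t = -1" using ys t unfolding pm_def by (meson insertE nth_mem singletonD subsetD)
    show ?thesis unfolding fs_query[OF lev_lt] sg_def using y m g0 H0 by auto
  qed
  note eq = this
  have lS: "length (ext XX [] ys) = T" using ys(1) by (simp add: length_ext)
  show ?thesis
  proof (rule Collect_cong)
    fix t
    show "(t < length (ext XX [] ys) \<and> snd (ext XX [] ys ! t) * fs (thr ys) (fst (ext XX [] ys ! t)) \<le> gam)
        = (t < T \<and> ys ! t \<noteq> sg ys (lev t))"
    proof (cases "t < T")
      case True
      then show ?thesis unfolding lS S_nth[OF ys(1) True] using eq[OF True] by simp
    next
      case False
      then show ?thesis unfolding lS by simp
    qed
  qed
qed

lemma blk_props:
  assumes ys: "length ys = T" "pm ys" and g: "gg < K"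
  shows "length (blk ys gg) = len gg" "pm (blk ys gg)"
    "i < len gg \<Longrightarrow> blk ys gg ! i = ys ! (gg*nn + i)"
    "sg ys gg = (if 0 \<le> sum_list (blk ys gg) then 1 else -1)"
proof -
  have e: "gg*nn + len gg \<le> T" using len_end[OF g] .
  show "length (blk ys gg) = len gg" using e ys by (simp add: blk_def)
  show "pm (blk ys gg)" using ys(2) unfolding pm_def blk_def by (meson in_set_dropD in_set_takeD subset_code(1))
  show "i < len gg \<Longrightarrow> blk ys gg ! i = ys ! (gg*nn + i)" using e ys by (simp add: blk_def)
  show "sg ys gg = (if 0 \<le> sum_list (blk ys gg) then 1 else -1)"
    using g by (simp add: sg_def mbit_def blk_def)
qed

lemma card_level:
  assumes ys: "length ys = T" "pm ys" and g: "gg < K"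
  shows "real (card {t. t < T \<and> lev t = gg \<and> ys ! t \<noteq> sg ys (lev t)})
       = (real (len gg) - \<bar>sum_list (blk ys gg)\<bar>) / 2"
proof -
  have "{t. t < T \<and> lev t = gg \<and> ys ! t \<noteq> sg ys (lev t)}
      = (\<lambda>i. gg*nn + i) ` {i. i < length (blk ys gg) \<and> blk ys gg ! i \<noteq> (if 0 \<le> sum_list (blk ys gg) then 1 else -1)}"
  proof (rule set_eqI iffI)+
    fix t assume "t \<in> {t. t < T \<and> lev t = gg \<and> ys ! t \<noteq> sg ys (lev t)}"
    then have t: "t < T" "lev t = gg" "ys ! t \<noteq> sg ys gg" by auto
    then have r: "gg*nn \<le> t" "t < gg*nn + len gg" using lev_iff[OF t(1) g] by auto
    show "t \<in> (\<lambda>i. gg*nn + i) ` {i. i < length (blk ys gg) \<and> blk ys gg ! i \<noteq> (if 0 \<le> sum_list (blk ys gg) then 1 else -1)}"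
      apply (rule image_eqI[of _ _ "t - gg*nn"])
      using r t blk_props[OF ys g] by auto
  next
    fix t assume "t \<in> (\<lambda>i. gg*nn + i) ` {i. i < length (blk ys gg) \<and> blk ys gg ! i \<noteq> (if 0 \<le> sum_list (blk ys gg) then 1 else -1)}"
    then obtain i where i: "t = gg*nn + i" "i < len gg" "blk ys gg ! i \<noteq> (if 0 \<le> sum_list (blk ys gg) then 1 else -1)"
      using blk_props[OF ys g] by auto
    have tT: "t < T" using i len_end[OF g] by simp
    have "lev t = gg" using lev_iff[OF tT g] i by simp
    then show "t \<in> {t. t < T \<and> lev t = gg \<and> ys ! t \<noteq> sg ys (lev t)}"
      using tT i blk_props[OF ys g] by auto
  qed
  moreover have "inj_on (\<lambda>i. gg*nn + i) A" for A by (simp add: inj_on_def)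
  ultimately have "card {t. t < T \<and> lev t = gg \<and> ys ! t \<noteq> sg ys (lev t)}
     = card {i. i < length (blk ys gg) \<and> blk ys gg ! i \<noteq> (if 0 \<le> sum_list (blk ys gg) then 1 else -1)}"
    by (simp add: card_image)
  then show ?thesis using card_mismatch_maj[OF blk_props(2)[OF ys g]] blk_props(1)[OF ys g] by simp
qed

lemma err_bound:
  assumes ys: "length ys = T" "pm ys"
  shows "real (card {t. t < length (ext XX [] ys) \<and> snd (ext XX [] ys ! t) * fs (thr ys) (fst (ext XX [] ys ! t)) \<le> gam})
     = Bnd ys"
proof -
  let ?A = "{t. t < T \<and> ys ! t \<noteq> sg ys (lev t)}"
  have fin: "finite ?A" by simp
  have "(\<Sum>gg<K. \<Sum>t\<in>{t \<in> ?A. lev t = gg}. (1::nat)) = (\<Sum>t\<in>?A. 1)"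
    by (rule sum.group) (use lev_lt in auto)
  then have "card ?A = (\<Sum>gg<K. card {t \<in> ?A. lev t = gg})" by simp
  also have "\<dots> = (\<Sum>gg<K. card {t. t < T \<and> lev t = gg \<and> ys ! t \<noteq> sg ys (lev t)})"
    by (intro sum.cong) (auto intro!: arg_cong[where f=card])
  finally have "real (card ?A) = (\<Sum>gg<K. real (card {t. t < T \<and> lev t = gg \<and> ys ! t \<noteq> sg ys (lev t)}))"
    by simp
  also have "\<dots> = (\<Sum>gg<K. (real (len gg) - \<bar>sum_list (blk ys gg)\<bar>) / 2)"
    by (rule sum.cong[OF refl]) (use card_level[OF ys] in simp)
  finally show ?thesis unfolding err_set[OF ys] Bnd_def blk_def .
qed

lemma av_Bnd: "real T / 2 - av Bnd T = (\<Sum>gg<K. av (\<lambda>zs. \<bar>sum_list zs\<bar>) (len gg)) / 2"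
proof -
  have "av Bnd T = (\<Sum>gg<K. av (\<lambda>ys. (1/2) * (real (len gg) - \<bar>sum_list (take (len gg) (drop (gg*nn) ys))\<bar>)) T)"
    unfolding Bnd_def by (subst av_sum[symmetric]) simp_all
  also have "\<dots> = (\<Sum>gg<K. (1/2) * (real (len gg) - av (\<lambda>zs. \<bar>sum_list zs\<bar>) (len gg)))"
  proof (rule sum.cong[OF refl])
    fix gg assume "gg \<in> {..<K}"
    then have e: "gg*nn + len gg \<le> T" using len_end by simp
    show "av (\<lambda>ys. (1/2) * (real (len gg) - \<bar>sum_list (take (len gg) (drop (gg*nn) ys))\<bar>)) T
       = (1/2) * (real (len gg) - av (\<lambda>zs. \<bar>sum_list zs\<bar>) (len gg))"
      by (simp only: av_cmult av_diff av_const av_block[OF e, of "\<lambda>zs. \<bar>sum_list zs\<bar>"])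
  qed
  also have "\<dots> = (\<Sum>gg<K. real (len gg)) / 2 - (\<Sum>gg<K. av (\<lambda>zs. \<bar>sum_list zs\<bar>) (len gg)) / 2"
    by (simp add: sum_subtractf sum_divide_distrib[symmetric] field_simps)
  also have "(\<Sum>gg<K. real (len gg)) = real T" using sum_len by (simp flip: of_nat_sum)
  finally show ?thesis by simp
qed

lemma gap_bound: "real T / 2 - av Bnd T \<ge> real K * (3 * sqrt (real nn) / (4 * sqrt 2)) / 2"
proof -
  have "\<And>gg. gg \<in> {..<K} \<Longrightarrow> 3 * sqrt (real nn) / (4 * sqrt 2) \<le> av (\<lambda>zs. \<bar>sum_list zs\<bar>) (len gg)"
  proof -
    fix gg
    have l: "len gg \<ge> 1" using len_ge nn1 by (meson le_trans)
    have "3 * sqrt (real nn) / (4 * sqrt 2) \<le> 3 * sqrt (real (len gg)) / (4 * sqrt 2)"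
      using len_ge[of gg] by (simp add: divide_right_mono)
    also have "\<dots> \<le> av (\<lambda>zs. \<bar>sum_list zs\<bar>) (len gg)" by (rule abs_moment[OF l])
    finally show "3 * sqrt (real nn) / (4 * sqrt 2) \<le> av (\<lambda>zs. \<bar>sum_list zs\<bar>) (len gg)" .
  qed
  then have "(\<Sum>gg<K. 3 * sqrt (real nn) / (4 * sqrt 2)) \<le> (\<Sum>gg<K. av (\<lambda>zs. \<bar>sum_list zs\<bar>) (len gg))"
    by (rule sum_mono)
  then show ?thesis unfolding av_Bnd by simp
qed

end

lemma cover_bound:
  assumes r: "r > 0"
  shows "real (cover_num r) < 1 / (2*r) + 1"
proof -
  define M where "M = nat \<lceil>1/(2*r)\<rceil>"
  have M1: "M \<ge> 1" using r unfolding M_def by (simp add: Suc_le_eq)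
  have Mge: "real M \<ge> 1/(2*r)" unfolding M_def by linarith
  have Mlt: "real M < 1/(2*r) + 1" unfolding M_def
    using r by (simp add: of_nat_nat) linarith
  have 2: "2 * real M * r \<ge> 1" using Mge r by (simp add: field_simps)
  define C where "C = (\<lambda>j. min 1 ((2*real j+1)*r)) ` {..<M}"
  have fin: "finite C" unfolding C_def by simp
  have sub: "C \<subseteq> {0..1}" unfolding C_def using r by auto
  have card: "card C \<le> M" unfolding C_def using card_image_le[of "{..<M}"] by simp
  have cov: "\<forall>x\<in>{0..1}. \<exists>c\<in>C. \<bar>x - c\<bar> \<le> r"
  proof
    fix x :: real assume x: "x \<in> {0..1}"
    define J where "J = nat \<lfloor>x/(2*r)\<rfloor>"
    have y0: "x/(2*r) \<ge> 0" using x r by simp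
    have rJ: "real J = of_int \<lfloor>x/(2*r)\<rfloor>" using y0 by (simp add: J_def)
    have f1: "real J \<le> x/(2*r)" unfolding rJ by (rule of_int_floor_le)
    have f2: "x/(2*r) < real J + 1" unfolding rJ by (rule real_of_int_floor_add_one_gt)
    have J1: "2 * real J * r \<le> x" using f1 r by (simp add: pos_le_divide_eq mult.commute mult.left_commute)
    have J2: "x < 2 * (real J + 1) * r" using f2 r by (simp add: pos_divide_less_eq mult.commute mult.left_commute)
    show "\<exists>c\<in>C. \<bar>x - c\<bar> \<le> r"
    proof (cases "J < M")
      case True
      have cin: "min 1 ((2*real J+1)*r) \<in> C" unfolding C_def using True by blast
      have "\<bar>x - min 1 ((2*real J+1)*r)\<bar> \<le> r"
        using J1 J2 x by (auto simp: min_def algebra_simps abs_le_iff)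
      then show ?thesis using cin by blast
    next
      case False
      then have "real J \<ge> real M" by simp
      then have "2 * real J * r \<ge> 2 * real M * r" using r by (simp add: mult_right_mono)
      then have x1: "x = 1" using J1 2 x by simp
      have cin: "min 1 ((2*real (M-1)+1)*r) \<in> C" unfolding C_def using M1 by (intro imageI) simp
      have e: "2*real (M-1)+1 = 2 * real M - 1" using M1 by (simp add: of_nat_diff)
      have "\<bar>x - min 1 ((2*real (M-1)+1)*r)\<bar> \<le> r"
        unfolding e x1 using 2 r by (auto simp: min_def algebra_simps abs_le_iff)
      then show ?thesis using cin by blast
    qed
  qed
  have "cover_num r \<le> card C" unfolding cover_num_def
    by (rule Least_le) (use fin sub cov in blast)
  then have "real (cover_num r) \<le> real M" using card by linarith
  then show ?thesis using Mlt by linarith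
qed


lemma main:
  fixes \<gamma> L :: real and d T :: nat
  assumes g0: "0 < \<gamma>" and g1: "\<gamma> < 1/2" and L0: "0 < L" and d1: "1 \<le> d"
    and dN: "d \<le> cover_num (sqrt (32 / pi) * \<gamma> / L)"
    and TT: "real d * ln (real (cover_num (sqrt (32 / pi) * \<gamma> / L)) / real d) \<le> real T"
  shows "\<exists>F. (\<forall>f\<in>F. (\<forall>x\<in>{0..1}. \<bar>f x\<bar> \<le> 1) \<and> L-lipschitz_on {0..1} f) \<and>
           pdim {0..1} F = enat d \<and>
           (\<forall>q. learner q \<longrightarrow>
              (\<exists>S. length S = T \<and> (\<forall>p\<in>set S. fst p \<in> {0..1} \<and> snd p \<in> {-1, 1}) \<and>
                   exp_mistakes q S - real (opt_margin F \<gamma> S)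
                     \<ge> 1/10 * sqrt (real T * real d * ln (real (cover_num (sqrt (32 / pi) * \<gamma> / L)) / real d))))"
proof -
  define r where "r = sqrt (32 / pi) * \<gamma> / L"
  define N where "N = cover_num r"
  have r0: "r > 0" unfolding r_def using g0 L0 by simp
  have Nb: "real N < 1/(2*r) + 1" unfolding N_def by (rule cover_bound[OF r0])
  have sq: "sqrt (32/pi) \<ge> 2"
  proof -
    have "32/pi \<ge> 4" using pi_less_4 pi_gt3 by (simp add: field_simps)
    then have "sqrt (32/pi) \<ge> sqrt 4" by (rule real_sqrt_le_mono)
    then show ?thesis by simp
  qed
  have "1/(2*r) = L / (2 * sqrt (32/pi) * \<gamma>)" unfolding r_def using g0 L0 by (simp add: field_simps)
  also have "\<dots> \<le> L / (4 * \<gamma>)" using sq g0 L0 by (intro divide_left_mono) (auto intro: mult_pos_pos)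
  finally have Nb4: "real N - 1 < L / (4*\<gamma>)" using Nb by linarith
  have dN': "d \<le> N" using dN unfolding N_def r_def .
  define m where "m = N div d"
  have m1: "m \<ge> 1" unfolding m_def using dN' d1 by (simp add: div_greater_zero_iff Suc_le_eq)
  obtain l where l: "2^l \<le> m+1" "m+1 < 2^(l+1)" using ex_power_ivl1[of 2 "m+1"] by auto
  have l1: "l \<ge> 1"
  proof (rule ccontr)
    assume "\<not> l \<ge> 1" then have "l = 0" by simp
    then show False using l m1 by simp
  qed
  have Nlt: "N < d * (m+1)" unfolding m_def using d1
    by (metis add.commute div_mult_mod_eq mod_less_divisor mult.commute mult_Suc_right nat_add_left_cancel_less not_one_le_zero zero_less_iff_neq_zero Suc_eq_plus1)
  have dm: "d * m \<le> N" unfolding m_def by (simp add: mult.commute)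
  have dl: "d * 2^l \<le> 2 * N"
  proof -
    have "d * 2^l \<le> d * (m+1)" using l(1) by (rule mult_le_mono2)
    also have "\<dots> = d*m + d" by simp
    finally show ?thesis using dm dN' by linarith
  qed
  define G where "G = d * 2^l - 2"
  define D where "D = (if d * 2^l > 2 then 1 / real G else 1)"
  define H where "H = (if d * 2^l > 2 then L / (2 * real G) else 1)"
  have G2: "real G < L / (2*\<gamma>)"
  proof -
    have "G \<le> 2*N - 2" unfolding G_def using dl by simp
    then have "real G \<le> 2 * real N - 2" using dN' d1 by (simp add: of_nat_diff)
    also have "\<dots> < L / (2*\<gamma>)" using Nb4 g0 by (simp add: field_simps)
    finally show ?thesis .
  qed
  have Gpos: "0 < real G" if "2 < d*2^l"
  proof -
    have "0 < G" using that unfolding G_def by simp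
    then show ?thesis by simp
  qed
  have cstr: "constr d l K T' L H D \<gamma>" if K: "1 \<le> K" "K \<le> d*l" "K \<le> T'" for K T'
  proof
    show "d \<ge> 1" "l \<ge> 1" "K \<ge> 1" "K \<le> d*l" "K \<le> T'" "L > 0" "\<gamma> > 0" "\<gamma> < 1"
      using d1 l1 K L0 g0 g1 by auto
    show "H > \<gamma>"
    proof (cases "d * 2^l > 2")
      case True
      then have "G > 0" unfolding G_def by simp
      then have Gp: "real G > 0" by simp
      have "\<gamma> * (2 * real G) < L" using G2 g0 by (simp add: field_simps)
      then show ?thesis using True Gp unfolding H_def by (simp add: field_simps)
    next
      case False then show ?thesis using g1 unfolding H_def by simp
    qed
    show "D > 0" unfolding D_def using Gpos by auto
    show "2 * H \<le> L * D" if "d*2^l > 2" using that unfolding H_def D_def by simp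
    show "real (d*2^l - 2) * D \<le> 1"
    proof (cases "d * 2^l > 2")
      case True
      then have "G > 0" unfolding G_def by simp
      then have Gp: "real G > 0" by simp
      then show ?thesis using True unfolding D_def G_def[symmetric] by simp
    next
      case False
      then have "d*2^l - 2 = 0" by simp
      then show ?thesis by simp
    qed
  qed
  have dl1: "1 \<le> d*l" using d1 l1 by simp
  interpret c0: constr d l 1 1 L H D \<gamma> using cstr[of 1 1] dl1 by simp
  define F where "F = c0.FF"
  have Fprops: "\<forall>f\<in>F. (\<forall>x\<in>{0..1}. \<bar>f x\<bar> \<le> 1) \<and> L-lipschitz_on {0..1} f"
    unfolding F_def c0.FF_def using c0.fs_bound c0.fs_lip by auto
  have Fpdim: "pdim {0..1} F = enat d" unfolding F_def by (rule c0.pdim_FF)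
  have Fne: "F \<noteq> {}" unfolding F_def c0.FF_def by simp
  show ?thesis
  proof (intro exI[of _ F] conjI allI impI Fprops Fpdim)
    fix q :: "(real \<times> real) list \<Rightarrow> real \<Rightarrow> real"
    show "\<exists>S. length S = T \<and> (\<forall>p\<in>set S. fst p \<in> {0..1} \<and> snd p \<in> {-1, 1}) \<and>
           exp_mistakes q S - real (opt_margin F \<gamma> S)
             \<ge> 1/10 * sqrt (real T * real d * ln (real (cover_num (sqrt (32 / pi) * \<gamma> / L)) / real d))"
    proof (cases "T = 0")
      case True
      have "opt_margin F \<gamma> [] = 0" unfolding opt_margin_def using Fne by simp
      then show ?thesis using True by (intro exI[of _ "[]"]) (simp add: exp_mistakes_def)
    next
      case False
      define K where "K = min T (d*l)"
      have K: "1 \<le> K" "K \<le> d*l" "K \<le> T" using False dl1 unfolding K_def by auto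
      interpret c: constr d l K T L H D \<gamma> by (rule cstr[OF K])
      have FF: "c.FF = F" unfolding F_def c.FF_def c0.FF_def c.fs_def c0.fs_def c.AA_def c0.AA_def
        c.val_def c0.val_def c.pos_def c0.pos_def by simp
      obtain ys where ys: "length ys = T" "set ys \<subseteq> {-1,1}"
        "exp_mistakes q (ext c.XX [] ys) - c.Bnd ys \<ge> exp_mistakes q [] + real T / 2 - av c.Bnd T"
        using game[where n=T and q=q and X=c.XX and h="[]" and G=c.Bnd] by blast
      have pm: "pm ys" using ys(2) by (simp add: pm_def)
      define S where "S = ext c.XX [] ys"
      have lS: "length S = T" unfolding S_def using ys(1) by (simp add: length_ext)
      have pts: "\<forall>p\<in>set S. fst p \<in> {0..1} \<and> snd p \<in> {-1, 1}"
      proof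
        fix p assume "p \<in> set S"
        then obtain t where t: "t < T" "p = S ! t" using lS by (metis in_set_conv_nth)
        have "p = (c.pos (c.kq ys (c.lev t)), ys ! t)" unfolding t S_def by (rule c.S_nth[OF ys(1) t(1)])
        moreover have "c.pos (c.kq ys (c.lev t)) \<in> {0..1}" using c.pos_01 c.kq_parts(3) c.lev_lt by blast
        moreover have "ys ! t \<in> {-1,1}" using ys t by (metis nth_mem subsetD)
        ultimately show "fst p \<in> {0..1} \<and> snd p \<in> {-1, 1}" by simp
      qed
      have "opt_margin F \<gamma> S \<le> card {t. t < length S \<and> snd (S ! t) * c.fs (c.thr ys) (fst (S ! t)) \<le> \<gamma>}"
        unfolding opt_margin_def
        by (rule cINF_lower) (auto simp: FF[symmetric] c.FF_def)
      then have opt: "real (opt_margin F \<gamma> S) \<le> c.Bnd ys"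
        using c.err_bound[OF ys(1) pm] unfolding S_def by linarith
      have e0: "exp_mistakes q [] = 0" by (simp add: exp_mistakes_def)
      have gap: "exp_mistakes q S - real (opt_margin F \<gamma> S) \<ge> real K * (3 * sqrt (real c.nn) / (4 * sqrt 2)) / 2"
        using ys(3) opt c.gap_bound e0 unfolding S_def by linarith
      have "1/10 * sqrt (real T * real d * ln (real N / real d)) \<le> real K * (3 * sqrt (real c.nn) / (4 * sqrt 2)) / 2"
      proof -
        have nn1: "c.nn \<ge> 1" by (rule c.nn1)
        have "T = K * c.nn + T mod K" unfolding c.nn_def by simp
        moreover have "T mod K < K" using K by simp
        ultimately have "T < K * c.nn + K" by linarith
        moreover have "K \<le> K * c.nn" using nn1 by simp
        ultimately have "T \<le> 2 * K * c.nn" by linarith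
        then have T2: "real T \<le> 2 * real K * real c.nn" by (metis of_nat_le_iff of_nat_mult of_nat_numeral)
        have Nd0: "real N / real d \<ge> 1" using dN' d1 by simp
        then have ln0: "0 \<le> ln (real N / real d)" by simp
        have "real N < real (d * (m + 1))" using Nlt by (simp only: of_nat_less_iff)
        then have "real N < real d * (real m + 1)" by (simp add: algebra_simps)
        then have "real N / real d < real m + 1" using d1 by (simp add: divide_less_eq mult.commute)
        also have "real m + 1 < 2 ^ (l+1)"
        proof -
          have "real (m+1) < real (2^(l+1))" using l(2) by (simp only: of_nat_less_iff)
          then show ?thesis by simp
        qed
        finally have "ln (real N / real d) < ln (2 ^ (l+1))" using Nd0 by simp
        also have "ln ((2::real) ^ (l+1)) = real (l+1) * ln 2" using ln_realpow[of 2 "l+1"] by simp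
        also have "\<dots> \<le> real (l+1)" using ln_2_less_1 by simp
        finally have lnb: "ln (real N / real d) \<le> 2 * real l" using l1 by simp
        have dlnK: "real d * ln (real N / real d) \<le> 2 * real K"
        proof (cases "K = T")
          case True
          have "real d * ln (real N / real d) \<le> real T" using TT unfolding N_def r_def .
          then show ?thesis using True by simp
        next
          case False
          then have "K = d * l" unfolding K_def by (simp add: min_def split: if_splits)
          moreover have "real d * ln (real N / real d) \<le> real d * (2 * real l)"
            using lnb by (intro mult_left_mono) auto
          ultimately show ?thesis by simp
        qed
        have X: "real T * real d * ln (real N / real d) \<le> (2 * real K * real c.nn) * (2 * real K)"
        proof -
          have "real T * (real d * ln (real N / real d)) \<le> (2 * real K * real c.nn) * (2 * real K)"
            by (rule mult_mono[OF T2 dlnK]) (use ln0 in auto)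
          then show ?thesis by (simp add: mult.assoc)
        qed
        have "sqrt (real T * real d * ln (real N / real d)) \<le> sqrt ((2 * real K * real c.nn) * (2 * real K))"
          using X by (rule real_sqrt_le_mono)
        also have "sqrt ((2 * real K * real c.nn) * (2 * real K)) = 2 * real K * sqrt (real c.nn)"
        proof -
          have "(2 * real K * real c.nn) * (2 * real K) = (2 * real K)^2 * real c.nn" by (simp add: power2_eq_square)
          then show ?thesis by (simp add: real_sqrt_mult)
        qed
        finally have s1: "1/10 * sqrt (real T * real d * ln (real N / real d)) \<le> real K * sqrt (real c.nn) / 5" by simp
        have s2: "sqrt 2 \<le> 3/2"
        proof -
          have "sqrt 2 \<le> sqrt ((3/2)^2)" by (intro real_sqrt_le_mono) (simp add: power2_eq_square)
          then show ?thesis by simp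
        qed
        have "real K * sqrt (real c.nn) / 5 \<le> real K * (3 * sqrt (real c.nn) / (4 * sqrt 2)) / 2"
        proof -
          have p: "real K * sqrt (real c.nn) \<ge> 0" by simp
          have "1/5 \<le> 3 / (8 * sqrt 2)" using s2 by (simp add: field_simps)
          then have "real K * sqrt (real c.nn) * (1/5) \<le> real K * sqrt (real c.nn) * (3 / (8 * sqrt 2))"
            using p by (intro mult_left_mono)
          then show ?thesis by (simp add: field_simps)
        qed
        then show ?thesis using s1 by linarith
      qed
      then show ?thesis using gap lS pts unfolding N_def r_def by (intro exI[of _ S]) simp
    qed
  qed
qed

theorem theorem13:
  shows "\<exists>c>0. \<forall>(\<gamma>::real) (L::real) (d::nat) (T::nat).
    (let N = cover_num (sqrt (32 / pi) * \<gamma> / L) in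
      0 < \<gamma> \<and> \<gamma> < 1/2 \<and> 0 < L \<and> 1 \<le> d \<and> d \<le> N \<and>
      real T \<ge> real d * ln (real N / real d) \<longrightarrow>
      (\<exists>F. (\<forall>f\<in>F. (\<forall>x\<in>{0..1}. \<bar>f x\<bar> \<le> 1) \<and> L-lipschitz_on {0..1} f) \<and>
           pdim {0..1} F = enat d \<and>
           (\<forall>q. learner q \<longrightarrow>
              (\<exists>S. length S = T \<and> (\<forall>p\<in>set S. fst p \<in> {0..1} \<and> snd p \<in> {-1, 1}) \<and>
                   exp_mistakes q S - real (opt_margin F \<gamma> S)
                     \<ge> c * sqrt (real T * real d * ln (real N / real d))))))"
proof (rule exI[of _ "1/10"], intro conjI allI)
  show "(0::real) < 1/10" by simp
next
  fix \<gamma> L :: real and d T :: nat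
  show "let N = cover_num (sqrt (32 / pi) * \<gamma> / L) in
      0 < \<gamma> \<and> \<gamma> < 1/2 \<and> 0 < L \<and> 1 \<le> d \<and> d \<le> N \<and>
      real T \<ge> real d * ln (real N / real d) \<longrightarrow>
      (\<exists>F. (\<forall>f\<in>F. (\<forall>x\<in>{0..1}. \<bar>f x\<bar> \<le> 1) \<and> L-lipschitz_on {0..1} f) \<and>
           pdim {0..1} F = enat d \<and>
           (\<forall>q. learner q \<longrightarrow>
              (\<exists>S. length S = T \<and> (\<forall>p\<in>set S. fst p \<in> {0..1} \<and> snd p \<in> {-1, 1}) \<and>
                   exp_mistakes q S - real (opt_margin F \<gamma> S)
                     \<ge> 1/10 * sqrt (real T * real d * ln (real N / real d)))))"
    unfolding Let_def by (intro impI) (elim conjE, rule main, assumption+)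
qed


end
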